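(* For the modified navigation function $\mathcal{V}_{nav}$ defined below, for all $(p,\theta)\in\mathcal{X}_p\times\mathbb{R}$, $$\nabla_p\mathcal{V}_{nav}(p,\theta)=\nabla_pV_{nav}(p)+(I_2-\mathcal{R}(\theta))^\top(p_d-p_o),$$ $$\nabla_\theta\mathcal{V}_{nav}(p,\theta)=\gamma_\theta\theta-(p-p_o)^\top\Delta\,\mathcal{R}(\theta)^\top(p_o-p_d),$$ and the set of critical points $C_{\mathcal{V}_{nav}}:=\{(p,\theta)\in\mathcal{X}_p\times\mathbb{R}:\nabla_p\mathcal{V}_{nav}(p,\theta)=0,\ \nabla_\theta\mathcal{V}_{nav}(p,\theta)=0\}$ equals $C_{V_{nav}}\times\{0\}$, where $C_{V_{nav}}=\{p\in\mathcal{X}_p:\nabla_pV_{nav}(p)=0\}$.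
   Context: Obstacle $\mathcal{O}=\{z\in\mathbb{R}^2:\|z-p_o\|\le r_o\}$ with center $p_o\in\mathbb{R}^2$ and radius $r_o>0$; safety margin $\varepsilon>0$; free space $\mathcal{X}_p=\{p\in\mathbb{R}^2:\|p-p_o\|\ge r_o+\varepsilon\}$. Distance $d_o(p)=\|p-p_o\|-r_o$. Destination $p_d\in\mathcal{X}_p$, $r_d:=d_o(p_d)$, and $r_s\in(\varepsilon,r_d)$. Barrier $\phi(z)=(z-r_s)^2\ln(r_s/z)$ for $z\in(0,r_s]$ and $\phi(z)=0$ for $z>r_s$. Navigation function $V_{nav}(p)=\frac12\|p-p_d\|^2+\varrho\,\phi(d_o(p))$ with $\varrho>0$; its gradient is $\nabla_pV_{nav}(p)=p-p_d+\varrho\,\phi'(d_o(p))\frac{p-p_o}{\|p-p_o\|}$. Rotation $\mathcal{R}(\theta)=\exp(\theta\Delta)=\begin{bmatrix}\cos\theta&-\sin\theta\\ \sin\theta&\cos\theta\end{bmatrix}$ with $\Delta=\begin{bmatrix}0&-1\\1&0\end{bmatrix}$. Transformation $\mathcal{T}(p,\theta)=p_o+\mathcal{R}(\theta)(p-p_o)$. Modified navigation function $\mathcal{V}_{nav}(p,\theta)=V_{nav}(\mathcal{T}(p,\theta))+\frac{\gamma_\theta}{2}\theta^2$ with $\gamma_\theta>0$, equivalently $\mathcal{V}_{nav}(p,\theta)=\frac12\|\mathcal{T}(p,\theta)-p_d\|^2+\varrho\phi(d_o(p))+\frac{\gamma_\theta}{2}\theta^2$. *)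

theory Defs
  imports "HOL-Analysis.Analysis"
begin

definition Rot :: "real \<Rightarrow> real^2^2" where
  "Rot \<theta> = vector [vector [cos \<theta>, - sin \<theta>], vector [sin \<theta>, cos \<theta>]]"

definition Dlt :: "real^2^2" where
  "Dlt = vector [vector [0, -1], vector [1, 0]]"

definition Tr :: "real^2 \<Rightarrow> real^2 \<Rightarrow> real \<Rightarrow> real^2" where
  "Tr p_o p \<theta> = p_o + Rot \<theta> *v (p - p_o)"

definition d_o :: "real^2 \<Rightarrow> real \<Rightarrow> real^2 \<Rightarrow> real" where
  "d_o p_o r_o p = norm (p - p_o) - r_o"

definition Xp :: "real^2 \<Rightarrow> real \<Rightarrow> real \<Rightarrow> (real^2) set" where
  "Xp p_o r_o \<epsilon> = {p. norm (p - p_o) \<ge> r_o + \<epsilon>}"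

text \<open>Barrier; the branch z \<le> 0 is never used on the free space.\<close>
definition phi :: "real \<Rightarrow> real \<Rightarrow> real" where
  "phi r_s z = (if z \<le> r_s then (z - r_s)^2 * ln (r_s / z) else 0)"

definition Vnav :: "real^2 \<Rightarrow> real \<Rightarrow> real^2 \<Rightarrow> real \<Rightarrow> real \<Rightarrow> real^2 \<Rightarrow> real" where
  "Vnav p_o r_o p_d r_s \<rho> p = 1/2 * (norm (p - p_d))^2 + \<rho> * phi r_s (d_o p_o r_o p)"

definition gradVnav :: "real^2 \<Rightarrow> real \<Rightarrow> real^2 \<Rightarrow> real \<Rightarrow> real \<Rightarrow> real^2 \<Rightarrow> real^2" where
  "gradVnav p_o r_o p_d r_s \<rho> p =
     p - p_d + (\<rho> * deriv (phi r_s) (d_o p_o r_o p)) *\<^sub>R ((1 / norm (p - p_o)) *\<^sub>R (p - p_o))"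

definition Vmod :: "real^2 \<Rightarrow> real \<Rightarrow> real^2 \<Rightarrow> real \<Rightarrow> real \<Rightarrow> real \<Rightarrow> real^2 \<Rightarrow> real \<Rightarrow> real" where
  "Vmod p_o r_o p_d r_s \<rho> \<gamma> p \<theta> = Vnav p_o r_o p_d r_s \<rho> (Tr p_o p \<theta>) + \<gamma> / 2 * \<theta>^2"

end

theory Submission imports Defs begin
lemmas cs = vector_matrix_mult_def matrix_vector_mult_def matrix_matrix_mult_def transpose_def sum_2 Rot_def Dlt_def mat_def inner_vec_def

lemma comp_simps:
  "(Rot t *v v) $ 1 = cos t * v$1 - sin t * v$2"
  "(Rot t *v v) $ 2 = sin t * v$1 + cos t * v$2"
  "(transpose (Rot t) *v v) $ 1 = cos t * v$1 + sin t * v$2"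
  "(transpose (Rot t) *v v) $ 2 = - sin t * v$1 + cos t * v$2"
  "(transpose (mat 1 - Rot t) *v v) $ 1 = (1 - cos t) * v$1 - sin t * v$2"
  "(transpose (mat 1 - Rot t) *v v) $ 2 = sin t * v$1 + (1 - cos t) * v$2"
  "((Dlt ** transpose (Rot t)) *v v) $ 1 = sin t * v$1 - cos t * v$2"
  "((Dlt ** transpose (Rot t)) *v v) $ 2 = cos t * v$1 + sin t * v$2"
  "x \<bullet> (y::real^2) = x$1*y$1 + x$2*y$2"
  "(v v* Rot t) $ 1 = cos t * v$1 + sin t * v$2"
  "(v v* Rot t) $ 2 = - sin t * v$1 + cos t * v$2"
  "(v v* (mat 1 - Rot t)) $ 1 = (1 - cos t) * v$1 - sin t * v$2"
  "(v v* (mat 1 - Rot t)) $ 2 = sin t * v$1 + (1 - cos t) * v$2"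
  by (simp_all add: cs algebra_simps)

lemma norm2_comp: "(norm (x::real^2))^2 = x$1^2 + x$2^2"
  by (simp only: power2_norm_eq_inner) (simp add: cs power2_eq_square)

lemma rot_norm: "norm (Rot t *v x) = norm x"
proof -
  have h: "(cos t)^2 + (sin t)^2 = 1" by simp
  have "(norm (Rot t *v x))^2 = (norm x)^2"
    unfolding norm2_comp apply (simp add: comp_simps) using h by algebra
  then show ?thesis by (simp add: power2_eq_iff_nonneg)
qed

lemma key1: "(Rot t *v h) \<bullet> (Rot t *v u + b) = h \<bullet> (u + transpose (Rot t) *v b)"
proof -
  have h: "(cos t)^2 + (sin t)^2 = 1" by simp
  show ?thesis apply (simp add: comp_simps) using h by algebra
qed

lemma crit_alg:
  fixes p p_o p_d :: "real^2" and k \<gamma> \<theta> :: real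
  assumes "\<gamma> > 0"
  shows "(p - p_d + k *\<^sub>R (p-p_o) + transpose (mat 1 - Rot \<theta>) *v (p_d - p_o) = 0 \<and>
          \<gamma> * \<theta> - (p-p_o) \<bullet> ((Dlt ** transpose (Rot \<theta>)) *v (p_o - p_d)) = 0)
     \<longleftrightarrow> (\<theta> = 0 \<and> p - p_d + k *\<^sub>R (p-p_o) = 0)" (is "?L \<longleftrightarrow> ?R")
proof
  assume L: ?L
  have E1: "(p - p_d + k *\<^sub>R (p-p_o) + transpose (mat 1 - Rot \<theta>) *v (p_d - p_o))$1 = 0"
   and E2: "(p - p_d + k *\<^sub>R (p-p_o) + transpose (mat 1 - Rot \<theta>) *v (p_d - p_o))$2 = 0"
    using L by auto
  have E3: "\<gamma> * \<theta> - (p-p_o) \<bullet> ((Dlt ** transpose (Rot \<theta>)) *v (p_o - p_d)) = 0" using L by auto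
  have "\<gamma> * \<theta> = 0" using E1 E2 E3 by (simp add: comp_simps) algebra
  then have t0: "\<theta> = 0" using assms by simp
  have "transpose (mat 1 - Rot \<theta>) = (0::real^2^2)"
    by (simp add: t0 cs vec_eq_iff forall_2)
  then have "p - p_d + k *\<^sub>R (p-p_o) = 0" using L by simp
  then show ?R using t0 by simp
next
  assume R: ?R
  then have t0: "\<theta> = 0" by simp
  have E1: "(p - p_d + k *\<^sub>R (p-p_o))$1 = 0" and E2: "(p - p_d + k *\<^sub>R (p-p_o))$2 = 0"
    using R by auto
  have "(p-p_o) \<bullet> ((Dlt ** transpose (Rot \<theta>)) *v (p_o - p_d)) = 0"
    using E1 E2 by (simp add: t0 comp_simps) algebra
  moreover have "transpose (mat 1 - Rot \<theta>) = (0::real^2^2)"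
    by (simp add: t0 cs vec_eq_iff forall_2)
  ultimately show ?L using R by (simp add: t0)
qed
lemma g_DERIV: assumes "0 < r_s" "0 < z"
  shows "((\<lambda>x. (x - r_s)^2 * ln (r_s / x)) has_real_derivative
           (2*(z-r_s)*ln(r_s/z) - (z-r_s)^2/z)) (at z)"
  using assms by (auto intro!: derivative_eq_intros simp: field_simps power2_eq_square)

lemma phi_differentiable: assumes "0 < r_s" "0 < z"
  shows "phi r_s differentiable (at z)"
proof -
  define S where "S = {..r_s}"
  define T where "T = {r_s<..}"
  have cl: "closure S = {..r_s}" "closure T = {r_s..}" by (auto simp: S_def T_def)
  have U: "S \<union> T = UNIV" by (auto simp: S_def T_def)
  have ST: "S \<union> (closure S \<inter> closure T) = {..r_s}" "T \<union> (closure S \<inter> closure T) = {r_s..}"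
    by (auto simp: S_def T_def cl)
  have e: "phi r_s = (\<lambda>x. if x \<in> S then (x - r_s)^2 * ln (r_s / x) else 0)"
    by (auto simp: phi_def S_def)
  have "((\<lambda>x. if x \<in> S then (x - r_s)^2 * ln (r_s / x) else 0) has_derivative
      (if z \<in> S then (\<lambda>h. (2*(z-r_s)*ln(r_s/z) - (z-r_s)^2/z) * h) else (\<lambda>h. 0)))
      (at z within (S \<union> T))"
  proof (rule has_derivative_If_within_closures[where f' = "\<lambda>z h. (2*(z-r_s)*ln(r_s/z) - (z-r_s)^2/z) * h"
        and g' = "\<lambda>z h. 0"])
    show "((\<lambda>x. (x - r_s)^2 * ln (r_s / x)) has_derivative (\<lambda>h. (2*(z-r_s)*ln(r_s/z) - (z-r_s)^2/z) * h))
        (at z within S \<union> (closure S \<inter> closure T))"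
      using g_DERIV[OF assms] unfolding has_field_derivative_def
      by (rule has_derivative_at_withinI)
    show "((\<lambda>x. 0) has_derivative (\<lambda>h. 0)) (at z within T \<union> (closure S \<inter> closure T))"
      by simp
    show "z \<in> closure S \<Longrightarrow> z \<in> closure T \<Longrightarrow> (z - r_s)^2 * ln (r_s / z) = 0"
      by (simp add: cl)
    show "z \<in> closure S \<Longrightarrow> z \<in> closure T \<Longrightarrow> (\<lambda>h. (2*(z-r_s)*ln(r_s/z) - (z-r_s)^2/z) * h) = (\<lambda>h. 0)"
      by (simp add: cl)
    show "z \<in> S \<union> T" by (simp add: U)
  qed
  then show ?thesis unfolding e U differentiable_def by blast
qed
lemma Vmod_eq:
  "Vmod p_o r_o p_d r_s \<rho> \<gamma> q t = 1/2 * (norm (Rot t *v (q - p_o) + (p_o - p_d)))^2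
     + \<rho> * phi r_s (norm (q - p_o) - r_o) + \<gamma>/2 * t^2"
proof -
  have "p_o + Rot t *v (q - p_o) - p_d = Rot t *v (q - p_o) + (p_o - p_d)" by (simp add: algebra_simps)
  moreover have "p_o + Rot t *v (q - p_o) - p_o = Rot t *v (q - p_o)" by simp
  ultimately show ?thesis unfolding Vmod_def Vnav_def Tr_def d_o_def by (simp only: rot_norm)
qed

lemma lin_der: "((\<lambda>q. Rot t *v (q - p_o) + b) has_derivative (\<lambda>h. Rot t *v h)) (at p)"
proof -
  have "((\<lambda>q. Rot t *v q - Rot t *v p_o + b) has_derivative (\<lambda>h. Rot t *v h - 0 + 0)) (at p)"
    by (intro has_derivative_add has_derivative_diff has_derivative_const
          bounded_linear.has_derivative[OF matrix_vector_mul_bounded_linear] has_derivative_ident)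
  then show ?thesis by (simp add: matrix_vector_mult_diff_distrib)
qed

lemma grad_p:
  fixes p p_o p_d :: "real^2"
  assumes "0 < r_s" "0 < norm (p - p_o) - r_o" "0 < r_o"
  shows "GDERIV (\<lambda>q. Vmod p_o r_o p_d r_s \<rho> \<gamma> q \<theta>) p :>
              (gradVnav p_o r_o p_d r_s \<rho> p + transpose (mat 1 - Rot \<theta>) *v (p_d - p_o))"
proof -
  define b where "b = p_o - p_d"
  define u where "u = p - p_o"
  define D where "D = deriv (phi r_s) (norm u - r_o)"
  have u0: "u \<noteq> 0" using assms(2,3) by (auto simp: u_def)
  have h1: "((\<lambda>q. 1/2 * (norm (Rot \<theta> *v (q - p_o) + b))^2) has_derivative
      (\<lambda>h. (Rot \<theta> *v h) \<bullet> (Rot \<theta> *v (p - p_o) + b))) (at p)"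
    unfolding power2_norm_eq_inner
    by (rule has_derivative_eq_rhs, (rule derivative_eq_intros lin_der)+) (auto simp: inner_commute)
  have dn: "((\<lambda>q. norm (q - p_o) - r_o) has_derivative (\<lambda>h. h \<bullet> sgn u)) (at p)"
  proof -
    have "((\<lambda>q. norm (q - p_o)) has_derivative (\<lambda>h. (h - 0) \<bullet> sgn u)) (at p)"
      by (rule has_derivative_compose[of "\<lambda>q. q - p_o" _ p UNIV "\<lambda>x. norm x", simplified],
          (intro has_derivative_diff has_derivative_ident has_derivative_const),
          use has_derivative_norm[OF u0] in \<open>simp add: u_def\<close>)
    then show ?thesis by (auto intro!: has_derivative_eq_rhs[OF has_derivative_diff[OF _ has_derivative_const]])
  qed
  have dphi: "DERIV (phi r_s) (norm (p - p_o) - r_o) :> D"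
    using phi_differentiable[OF assms(1,2)] unfolding D_def u_def
    by (simp add: DERIV_deriv_iff_real_differentiable)
  have h2: "((\<lambda>q. \<rho> * phi r_s (norm (q - p_o) - r_o)) has_derivative
      (\<lambda>h. \<rho> * (D * (h \<bullet> sgn u)))) (at p)"
    using has_derivative_compose[OF dn dphi[unfolded has_field_derivative_def]]
    by (intro has_derivative_mult_right) simp
  have "((\<lambda>q. Vmod p_o r_o p_d r_s \<rho> \<gamma> q \<theta>) has_derivative
     (\<lambda>h. (Rot \<theta> *v h) \<bullet> (Rot \<theta> *v (p - p_o) + b) + \<rho> * (D * (h \<bullet> sgn u)) + 0)) (at p)"
    unfolding Vmod_eq b_def[symmetric]
    by (intro has_derivative_add h1 h2 has_derivative_const)
  moreover have "(\<lambda>h. (Rot \<theta> *v h) \<bullet> (Rot \<theta> *v (p - p_o) + b) + \<rho> * (D * (h \<bullet> sgn u)) + 0)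
     = (\<lambda>h. h \<bullet> (gradVnav p_o r_o p_d r_s \<rho> p + transpose (mat 1 - Rot \<theta>) *v (p_d - p_o)))"
  proof
    fix h
    show "(Rot \<theta> *v h) \<bullet> (Rot \<theta> *v (p - p_o) + b) + \<rho> * (D * (h \<bullet> sgn u)) + 0 =
       h \<bullet> (gradVnav p_o r_o p_d r_s \<rho> p + transpose (mat 1 - Rot \<theta>) *v (p_d - p_o))"
      unfolding key1 gradVnav_def d_o_def
      by (simp add: comp_simps sgn_div_norm u_def b_def D_def algebra_simps divide_inverse)
  qed
  ultimately show ?thesis unfolding gderiv_def by simp
qed

lemma grad_t:
  fixes p p_o p_d :: "real^2"
  shows "((\<lambda>t. Vmod p_o r_o p_d r_s \<rho> \<gamma> p t) has_real_derivative
              (\<gamma> * \<theta> - (p - p_o) \<bullet> ((Dlt ** transpose (Rot \<theta>)) *v (p_o - p_d)))) (at \<theta>)"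
proof -
  define C where "C = \<rho> * phi r_s (norm (p - p_o) - r_o)"
  define u1 where "u1 = (p - p_o)$1"
  define u2 where "u2 = (p - p_o)$2"
  define b1 where "b1 = (p_o - p_d)$1"
  define b2 where "b2 = (p_o - p_d)$2"
  have e: "(\<lambda>t. Vmod p_o r_o p_d r_s \<rho> \<gamma> p t) = (\<lambda>t. 1/2 * ((cos t * u1 - sin t * u2 + b1)^2
      + (sin t * u1 + cos t * u2 + b2)^2) + C + \<gamma>/2 * t^2)"
    unfolding Vmod_eq norm2_comp C_def u1_def u2_def b1_def b2_def by (simp add: comp_simps)
  have r: "\<gamma> * \<theta> - (p - p_o) \<bullet> ((Dlt ** transpose (Rot \<theta>)) *v (p_o - p_d))
     = \<gamma> * \<theta> - (u1 * (sin \<theta> * b1 - cos \<theta> * b2) + u2 * (cos \<theta> * b1 + sin \<theta> * b2))"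
    unfolding u1_def u2_def b1_def b2_def by (simp add: comp_simps)
  show ?thesis unfolding e r
    apply (rule DERIV_cong)
     apply (rule derivative_eq_intros refl)+
    apply simp
    apply algebra
    done
qed

theorem lemma2:
  fixes p_o p_d :: "real^2" and r_o \<epsilon> r_s \<rho> \<gamma> :: real
  assumes "r_o > 0" and "\<epsilon> > 0"
    and "p_d \<in> Xp p_o r_o \<epsilon>"
    and "\<epsilon> < r_s" and "r_s < d_o p_o r_o p_d"
    and "\<rho> > 0" and "\<gamma> > 0"
  shows "(\<forall>p \<in> Xp p_o r_o \<epsilon>. \<forall>\<theta>::real.
            GDERIV (\<lambda>q. Vmod p_o r_o p_d r_s \<rho> \<gamma> q \<theta>) p :>
              (gradVnav p_o r_o p_d r_s \<rho> p + transpose (mat 1 - Rot \<theta>) *v (p_d - p_o))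
          \<and> ((\<lambda>t. Vmod p_o r_o p_d r_s \<rho> \<gamma> p t) has_real_derivative
              (\<gamma> * \<theta> - (p - p_o) \<bullet> ((Dlt ** transpose (Rot \<theta>)) *v (p_o - p_d)))) (at \<theta>))
      \<and> {(p, \<theta>). p \<in> Xp p_o r_o \<epsilon>
            \<and> gradVnav p_o r_o p_d r_s \<rho> p + transpose (mat 1 - Rot \<theta>) *v (p_d - p_o) = 0
            \<and> \<gamma> * \<theta> - (p - p_o) \<bullet> ((Dlt ** transpose (Rot \<theta>)) *v (p_o - p_d)) = 0}
        = {p \<in> Xp p_o r_o \<epsilon>. gradVnav p_o r_o p_d r_s \<rho> p = 0} \<times> {0}"
proof -
  have rs: "0 < r_s" using assms by linarith
  have part1: "\<forall>p \<in> Xp p_o r_o \<epsilon>. \<forall>\<theta>::real.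
            GDERIV (\<lambda>q. Vmod p_o r_o p_d r_s \<rho> \<gamma> q \<theta>) p :>
              (gradVnav p_o r_o p_d r_s \<rho> p + transpose (mat 1 - Rot \<theta>) *v (p_d - p_o))
          \<and> ((\<lambda>t. Vmod p_o r_o p_d r_s \<rho> \<gamma> p t) has_real_derivative
              (\<gamma> * \<theta> - (p - p_o) \<bullet> ((Dlt ** transpose (Rot \<theta>)) *v (p_o - p_d)))) (at \<theta>)"
  proof (intro ballI allI conjI grad_t grad_p rs)
    fix p assume "p \<in> Xp p_o r_o \<epsilon>"
    then show "0 < norm (p - p_o) - r_o" using assms by (simp add: Xp_def)
  qed (use assms in simp)
  have gv: "\<And>p. gradVnav p_o r_o p_d r_s \<rho> p = p - p_d +
      (\<rho> * deriv (phi r_s) (d_o p_o r_o p) * (1 / norm (p - p_o))) *\<^sub>R (p - p_o)"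
    by (simp add: gradVnav_def)
  have part2: "{(p, \<theta>). p \<in> Xp p_o r_o \<epsilon>
            \<and> gradVnav p_o r_o p_d r_s \<rho> p + transpose (mat 1 - Rot \<theta>) *v (p_d - p_o) = 0
            \<and> \<gamma> * \<theta> - (p - p_o) \<bullet> ((Dlt ** transpose (Rot \<theta>)) *v (p_o - p_d)) = 0}
        = {p \<in> Xp p_o r_o \<epsilon>. gradVnav p_o r_o p_d r_s \<rho> p = 0} \<times> {0}"
    unfolding gv using crit_alg[OF \<open>\<gamma> > 0\<close>] by auto
  show ?thesis using part1 part2 by blast
qed

end
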